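(* Let $\rho,T>0$ and $\theta=0$, and for each $N\ge2$ let $\tilde\Gamma,\bm\nu,\bm\omega$ be as in the context. Then along even $N\uparrow\infty$, $$\bm\nu^\top\tilde\Gamma\bm\nu\to\frac{2e^{6\rho T}(3\rho T+5)+e^{3\rho T}+3\rho T+7}{54e^{6\rho T}+27},\quad \bm\omega^\top(\tilde\Gamma-\tilde\Gamma^\top)\bm\nu\to\frac{4e^{6\rho T}-6e^{5\rho T}+e^{3\rho T}-3e^{-\rho T}+4}{6e^{6\rho T}+3},\quad \bm\omega^\top\tilde\Gamma\bm\omega\to e^{-\rho T}+\rho T+1,$$ and along odd $N\uparrow\infty$, $$\bm\nu^\top\tilde\Gamma\bm\nu\to\frac{2e^{6\rho T}(3\rho T+5)-3e^{3\rho T}-3\rho T-7}{54e^{6\rho T}-27},\quad \bm\omega^\top(\tilde\Gamma-\tilde\Gamma^\top)\bm\nu\to\frac{-4e^{6\rho T}-6e^{5\rho T}+3e^{3\rho T}+3e^{-\rho T}+4}{-6e^{6\rho T}+3},\quad \bm\omega^\top\tilde\Gamma\bm\omega\to-e^{-\rho T}+\rho T+1.$$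
   Context: For $N\ge2$ let $\tilde\Gamma$ be the $(N+1)\times(N+1)$ lower triangular matrix with $\tilde\Gamma_{ij}=0$ for $i<j$, $\tilde\Gamma_{ii}=1/2$, $\tilde\Gamma_{ij}=e^{-\rho(i-j)T/N}$ for $i>j$; $\Gamma:=\tilde\Gamma+\tilde\Gamma^\top$; $\bm\nu:=(\Gamma+\tilde\Gamma)^{-1}\mathbf1$ and $\bm\omega:=(\Gamma-\tilde\Gamma)^{-1}\mathbf1$ (the case $\theta=0$ of $(\Gamma\pm\tilde\Gamma+2\theta\mathrm{Id})^{-1}\mathbf1$), with $\mathbf1$ the all-ones vector; all depend on $N$. *)

theory Defs
  imports "HOL-Analysis.Analysis" "Jordan_Normal_Form.Matrix"
begin

definition GammaT :: "real \<Rightarrow> real \<Rightarrow> nat \<Rightarrow> real mat" where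
  "GammaT rho T N = mat (N+1) (N+1) (\<lambda>(i,j).
     if i < j then 0 else if i = j then 1/2
     else exp (- rho * real (i - j) * T / real N))"

definition Gamma :: "real \<Rightarrow> real \<Rightarrow> nat \<Rightarrow> real mat" where
  "Gamma rho T N = GammaT rho T N + transpose_mat (GammaT rho T N)"

definition mat_inv :: "real mat \<Rightarrow> real mat" where
  "mat_inv A = (THE B. B \<in> carrier_mat (dim_row A) (dim_row A) \<and>
                    A * B = 1\<^sub>m (dim_row A) \<and> B * A = 1\<^sub>m (dim_row A))"

definition nu_vec :: "real \<Rightarrow> real \<Rightarrow> nat \<Rightarrow> real vec" where
  "nu_vec rho T N = mat_inv (Gamma rho T N + GammaT rho T N) *\<^sub>v vec (N+1) (\<lambda>_. 1)"

definition omega_vec :: "real \<Rightarrow> real \<Rightarrow> nat \<Rightarrow> real vec" where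
  "omega_vec rho T N = mat_inv (Gamma rho T N - GammaT rho T N) *\<^sub>v vec (N+1) (\<lambda>_. 1)"

end

theory Submission
  imports Defs "Jordan_Normal_Form.Determinant" "HOL-Real_Asymp.Real_Asymp"
begin


definition aa :: "real \<Rightarrow> real \<Rightarrow> nat \<Rightarrow> real" where
  "aa rho T N = exp (- (rho*T) / real N)"
definition FG :: "real \<Rightarrow> (nat \<Rightarrow> real) \<Rightarrow> nat \<Rightarrow> real" where
  "FG a f i = (\<Sum>j<i. a^(i-j) * f j) + f i / 2"
definition FT :: "real \<Rightarrow> nat \<Rightarrow> (nat \<Rightarrow> real) \<Rightarrow> nat \<Rightarrow> real" where
  "FT a N f i = (\<Sum>j\<in>{i<..N}. a^(j-i) * f j) + f i / 2"

lemma G_carrier: "GammaT rho T N \<in> carrier_mat (N+1) (N+1)"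
  by (simp add: GammaT_def)

lemma G_idx: "i < N+1 \<Longrightarrow> j < N+1 \<Longrightarrow> GammaT rho T N $$ (i,j) =
   (if i<j then 0 else if i = j then 1/2 else aa rho T N ^ (i-j))"
proof -
  assume "i < N+1" "j < N+1"
  have "exp (- rho * real (i - j) * T / real N) = exp (real (i-j) * (- (rho*T) / real N))"
    by (simp add: field_simps)
  also have "\<dots> = aa rho T N ^ (i-j)" unfolding aa_def by (rule exp_of_nat_mult)
  finally have e: "exp (- rho * real (i - j) * T / real N) = aa rho T N ^ (i-j)" .
  show ?thesis
  proof (cases "j < i")
    case True
    then have "real (i - j) = real i - real j" by simp
    with e have "exp (- rho * (real i - real j) * T / real N) = aa rho T N ^ (i-j)" by simp
    then show ?thesis using \<open>i < N+1\<close> \<open>j < N+1\<close> True by (simp add: GammaT_def)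
  qed (use \<open>i < N+1\<close> \<open>j < N+1\<close> in \<open>auto simp: GammaT_def\<close>)
qed

lemma G_mult: assumes "i < N+1" shows "(GammaT rho T N *\<^sub>v vec (N+1) f) $ i = FG (aa rho T N) f i"
proof -
  let ?g = "\<lambda>j. GammaT rho T N $$ (i,j) * f j"
  have "(GammaT rho T N *\<^sub>v vec (N+1) f) $ i = (\<Sum>j\<in>{0..<N+1}. ?g j)"
    using assms by (simp add: G_carrier scalar_prod_def row_def GammaT_def)
  also have "\<dots> = (\<Sum>j\<in>{0..<i}. ?g j) + (\<Sum>j\<in>{i..<N+1}. ?g j)"
    using assms by (simp add: sum.atLeastLessThan_concat)
  also have "(\<Sum>j\<in>{i..<N+1}. ?g j) = ?g i + (\<Sum>j\<in>{Suc i..<N+1}. ?g j)"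
    using assms by (subst sum.atLeast_Suc_lessThan) auto
  also have "(\<Sum>j\<in>{Suc i..<N+1}. ?g j) = 0"
    by (rule sum.neutral) (auto simp: G_idx)
  also have "(\<Sum>j\<in>{0..<i}. ?g j) = (\<Sum>j<i. aa rho T N^(i-j) * f j)"
    unfolding atLeast0LessThan using assms by (intro sum.cong) (auto simp: G_idx)
  finally show ?thesis using assms by (simp add: FG_def G_idx)
qed

lemma GT_mult: assumes "i < N+1" shows "(transpose_mat (GammaT rho T N) *\<^sub>v vec (N+1) f) $ i = FT (aa rho T N) N f i"
proof -
  let ?g = "\<lambda>j. GammaT rho T N $$ (j,i) * f j"
  have "(transpose_mat (GammaT rho T N) *\<^sub>v vec (N+1) f) $ i = (\<Sum>j\<in>{0..<N+1}. ?g j)"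
    using assms by (simp add: G_carrier scalar_prod_def row_def GammaT_def)
  also have "\<dots> = (\<Sum>j\<in>{0..<i}. ?g j) + (\<Sum>j\<in>{i..<N+1}. ?g j)"
    using assms by (simp add: sum.atLeastLessThan_concat)
  also have "(\<Sum>j\<in>{i..<N+1}. ?g j) = ?g i + (\<Sum>j\<in>{Suc i..<N+1}. ?g j)"
    using assms by (subst sum.atLeast_Suc_lessThan) auto
  also have "(\<Sum>j\<in>{0..<i}. ?g j) = 0"
    by (rule sum.neutral) (use assms in \<open>auto simp: G_idx\<close>)
  also have "(\<Sum>j\<in>{Suc i..<N+1}. ?g j) = (\<Sum>j\<in>{i<..N}. aa rho T N^(j-i) * f j)"
    using assms by (intro sum.cong) (auto simp: G_idx)
  finally show ?thesis using assms by (simp add: FT_def G_idx)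
qed



lemma mat_inv_apply:
  fixes A :: "real mat"
  assumes A: "A \<in> carrier_mat n n" and inj: "\<And>v. v \<in> carrier_vec n \<Longrightarrow> A *\<^sub>v v = 0\<^sub>v n \<Longrightarrow> v = 0\<^sub>v n"
  and w: "w \<in> carrier_vec n" and Aw: "A *\<^sub>v w = b"
  shows "mat_inv A *\<^sub>v b = w"
proof -
  have "det A \<noteq> 0" using det_0_iff_vec_prod_zero_field[OF A] inj by auto
  from det_non_zero_imp_unit[OF A this, of "()"] obtain B where
    B: "B \<in> carrier_mat n n" "B * A = 1\<^sub>m n" "A * B = 1\<^sub>m n"
    unfolding Units_def ring_mat_def by auto
  have dA: "dim_row A = n" using A by simp
  have "mat_inv A = B"
    unfolding mat_inv_def dA
  proof (rule the_equality)
    show "B \<in> carrier_mat n n \<and> A * B = 1\<^sub>m n \<and> B * A = 1\<^sub>m n" using B by auto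
    fix C assume C: "C \<in> carrier_mat n n \<and> A * C = 1\<^sub>m n \<and> C * A = 1\<^sub>m n"
    have Cc: "C \<in> carrier_mat n n" using C by auto
    have "C = C * (A * B)" using Cc B by simp
    also have "\<dots> = (C * A) * B" by (rule assoc_mult_mat[OF Cc A B(1), symmetric])
    also have "\<dots> = 1\<^sub>m n * B" using C by simp
    also have "\<dots> = B" using B by simp
    finally show "C = B" .
  qed
  moreover have "B *\<^sub>v (A *\<^sub>v w) = w"
    using B A w by (simp add: assoc_mult_mat_vec[symmetric])
  ultimately show ?thesis using Aw by simp
qed

lemma S_step: fixes a :: real and f :: "nat \<Rightarrow> real" shows "(\<Sum>j<Suc i. a^(Suc i - j) * f j) = a * ((\<Sum>j<i. a^(i-j) * f j) + f i)"
proof -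
  have "(\<Sum>j<Suc i. a^(Suc i - j) * f j) = (\<Sum>j<i. a^(Suc i - j) * f j) + a * f i" by (auto simp: algebra_simps)
  also have "(\<Sum>j<i. a^(Suc i - j) * f j) = (\<Sum>j<i. a * (a^(i - j) * f j))"
    by (intro sum.cong) (auto simp: Suc_diff_le)
  finally show ?thesis by (simp add: sum_distrib_left algebra_simps)
qed

lemma qf_formula:
  fixes a :: real and f :: "nat \<Rightarrow> real"
  defines "S \<equiv> \<lambda>i. (\<Sum>j<i. a^(i-j) * f j)"
  shows "(\<Sum>i<m. f i * FG a f i) = ((1-a^2)*(\<Sum>i<m. (S i + f i)^2) + (S m)^2)/2"
proof (induction m)
  case 0 then show ?case by (simp add: S_def)
next
  case (Suc m)
  have "S (Suc m) = a * (S m + f m)" unfolding S_def by (rule S_step)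
  moreover have "FG a f m = S m + f m / 2" by (simp add: FG_def S_def)
  ultimately show ?case using Suc by (simp add: algebra_simps power2_eq_square)
qed

lemma aux_half: assumes "((p::real) + q)/2 \<le> 0" "0 \<le> q" shows "p \<le> 0"
proof -
  have "p + q \<le> 0" using assms(1) by simp
  then show ?thesis using assms(2) by linarith
qed

lemma qf_pos:
  fixes a :: real
  assumes "0 < a" "a < 1" "(\<Sum>i<m. f i * FG a f i) \<le> 0" "i < m"
  shows "f i = 0"
proof -
  define S where "S \<equiv> \<lambda>i. (\<Sum>j<i. a^(i-j) * f j)"
  have F: "(\<Sum>i<m. f i * FG a f i) = ((1-a^2)*(\<Sum>i<m. (S i + f i)^2) + (S m)^2)/2"
    unfolding S_def by (rule qf_formula)
  have a2: "0 < 1 - a^2" using assms by (simp add: power_less_one_iff abs_less_iff)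
  have nn: "0 \<le> (\<Sum>i<m. (S i + f i)^2)" by (simp add: sum_nonneg)
  have "0 \<le> (S m)^2" by simp
  moreover have "((1-a^2)*(\<Sum>i<m. (S i + f i)^2) + (S m)^2)/2 \<le> 0" using F assms(3) by simp
  ultimately have "(1-a^2)*(\<Sum>i<m. (S i + f i)^2) \<le> 0"
    using aux_half[of "(1-a^2)*(\<Sum>i<m. (S i + f i)^2)" "(S m)^2"] by blast
  then have "(\<Sum>i<m. (S i + f i)^2) = 0" using a2 nn by (smt (verit) mult_pos_pos)
  then have z: "\<forall>k\<in>{..<m}. (S k + f k)^2 = 0" by (subst (asm) sum_nonneg_eq_0_iff) auto
  have "\<forall>k\<le>i. S k = 0"
  proof (intro allI impI)
    fix k assume "k \<le> i" then show "S k = 0"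
    proof (induction k)
      case 0 then show ?case by (simp add: S_def)
    next
      case (Suc k)
      have "S (Suc k) = a * (S k + f k)" unfolding S_def by (rule S_step)
      moreover have "(S k + f k)^2 = 0" using z Suc.prems assms(4) by auto
      ultimately show ?case by simp
    qed
  qed
  then have "S i = 0" by simp
  moreover have "(S i + f i)^2 = 0" using z assms(4) by auto
  ultimately show ?thesis by simp
qed

lemma G_dims[simp]: "dim_row (GammaT rho T N) = N+1" "dim_col (GammaT rho T N) = N+1"
  by (simp_all add: GammaT_def)

lemma vec_eta: "v \<in> carrier_vec n \<Longrightarrow> vec n (\<lambda>i. v $ i) = v"
  by (auto intro: eq_vecI)

lemma cross:
  "(\<Sum>i<N+1. g i * FG (aa rho T N) f i) = (\<Sum>i<N+1. f i * FT (aa rho T N) N g i)"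
proof -
  have e: "(transpose_mat (GammaT rho T N) *\<^sub>v vec (N+1) g) \<bullet> vec (N+1) f = vec (N+1) g \<bullet> (GammaT rho T N *\<^sub>v vec (N+1) f)"
    by (intro transpose_vec_mult_scalar[OF G_carrier] vec_carrier)
  have 1: "(transpose_mat (GammaT rho T N) *\<^sub>v vec (N+1) g) \<bullet> vec (N+1) f = (\<Sum>i\<in>{0..<N+1}. FT (aa rho T N) N g i * f i)"
    unfolding scalar_prod_def 
    apply (rule sum.cong)
     apply simp
    apply (subst GT_mult)
    apply simp_all
    done
  have 2: "vec (N+1) g \<bullet> (GammaT rho T N *\<^sub>v vec (N+1) f) = (\<Sum>i\<in>{0..<N+1}. g i * FG (aa rho T N) f i)"
    unfolding scalar_prod_def 
    apply (rule sum.cong)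
     apply simp
    apply (subst G_mult)
    apply simp_all
    done
  have 3: "(\<Sum>i\<in>{0..<N+1}. FT (aa rho T N) N g i * f i) = (\<Sum>i<N+1. f i * FT (aa rho T N) N g i)"
    unfolding atLeast0LessThan by (rule sum.cong) (simp_all add: mult.commute)
  have "(\<Sum>i<N+1. g i * FG (aa rho T N) f i) = (\<Sum>i\<in>{0..<N+1}. g i * FG (aa rho T N) f i)"
    by (simp only: atLeast0LessThan)
  also have "\<dots> = vec (N+1) g \<bullet> (GammaT rho T N *\<^sub>v vec (N+1) f)" by (rule 2[symmetric])
  also have "\<dots> = (transpose_mat (GammaT rho T N) *\<^sub>v vec (N+1) g) \<bullet> vec (N+1) f" by (rule e[symmetric])
  also have "\<dots> = (\<Sum>i\<in>{0..<N+1}. FT (aa rho T N) N g i * f i)" by (rule 1)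
  also have "\<dots> = (\<Sum>i<N+1. f i * FT (aa rho T N) N g i)" by (rule 3)
  finally show ?thesis .
qed

lemma M_mult: assumes "i < N+1"
  shows "((Gamma rho T N + GammaT rho T N) *\<^sub>v vec (N+1) f) $ i = 2 * FG (aa rho T N) f i + FT (aa rho T N) N f i"
proof -
  let ?G = "GammaT rho T N" and ?v = "vec (N+1) f"
  have c1: "?G \<in> carrier_mat (N+1) (N+1)" by (rule G_carrier)
  have c2: "transpose_mat ?G \<in> carrier_mat (N+1) (N+1)" using c1 by (simp only: transpose_carrier_mat)
  have c3: "?G + transpose_mat ?G \<in> carrier_mat (N+1) (N+1)" by (rule add_carrier_mat[OF c2])
  have cv: "?v \<in> carrier_vec (N+1)" by (rule vec_carrier)
  have "(Gamma rho T N + ?G) *\<^sub>v ?v = (?G *\<^sub>v ?v + transpose_mat ?G *\<^sub>v ?v) + ?G *\<^sub>v ?v"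
    unfolding Gamma_def add_mult_distrib_mat_vec[OF c3 c1 cv] add_mult_distrib_mat_vec[OF c1 c2 cv] ..
  then have "((Gamma rho T N + ?G) *\<^sub>v ?v) $ i = ((?G *\<^sub>v ?v) $ i + (transpose_mat ?G *\<^sub>v ?v) $ i) + (?G *\<^sub>v ?v) $ i"
    using assms by (simp only: index_add_vec dim_mult_mat_vec G_dims index_transpose_mat)
  also have "\<dots> = 2 * FG (aa rho T N) f i + FT (aa rho T N) N f i"
    by (simp only: G_mult[OF assms] GT_mult[OF assms])
  finally show ?thesis .
qed

lemma M_carrier: "Gamma rho T N + GammaT rho T N \<in> carrier_mat (N+1) (N+1)"
  unfolding Gamma_def by (rule add_carrier_mat[OF G_carrier])

lemma Gm_eq: "Gamma rho T N - GammaT rho T N = transpose_mat (GammaT rho T N)"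
proof (rule eq_matI)
  fix i j assume "i < dim_row (transpose_mat (GammaT rho T N))" "j < dim_col (transpose_mat (GammaT rho T N))"
  then show "(Gamma rho T N - GammaT rho T N) $$ (i,j) = transpose_mat (GammaT rho T N) $$ (i,j)"
    by (simp add: Gamma_def)
qed (simp_all add: Gamma_def)



lemma low_geom:
  fixes a z :: real assumes "z \<noteq> a"
  shows "(\<Sum>j<i. a^(i-j) * z^j) = a * (z^i - a^i) / (z - a)"
proof (induction i)
  case 0 then show ?case by simp
next
  case (Suc i)
  have "(\<Sum>j<Suc i. a^(Suc i-j) * z^j) = a * ((\<Sum>j<i. a^(i-j) * z^j) + z^i)"
    by (rule S_step)
  also have "\<dots> = a * (a * (z^i - a^i) / (z - a) + z^i)" using Suc by simp
  also have "\<dots> = a * (z^Suc i - a^Suc i) / (z - a)"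
    using assms by (simp add: field_simps)
  finally show ?case .
qed

lemma up_geom_d:
  fixes a z :: real assumes "a * z \<noteq> 1"
  shows "(\<Sum>j\<in>{i<..i+d}. a^(j-i) * z^j) = (a * z^(i+1) - a^(d+1) * z^(i+d+1)) / (1 - a*z)"
proof (induction d)
  case 0 then show ?case by simp
next
  case (Suc d)
  have "{i<..i + Suc d} = insert (i + Suc d) {i<..i+d}" by auto
  then have "(\<Sum>j\<in>{i<..i+Suc d}. a^(j-i) * z^j) = a^(Suc d) * z^(i + Suc d) + (\<Sum>j\<in>{i<..i+d}. a^(j-i) * z^j)"
    by simp
  also have "\<dots> = a^(Suc d) * z^(i + Suc d) + (a * z^(i+1) - a^(d+1) * z^(i+d+1)) / (1 - a*z)"
    using Suc by simp
  also have "\<dots> = (a * z^(i+1) - a^(Suc d+1) * z^(i+Suc d+1)) / (1 - a*z)"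
    using assms by (simp add: field_simps)
  finally show ?case .
qed

lemma up_geom:
  fixes a z :: real assumes "a * z \<noteq> 1" "i \<le> N"
  shows "(\<Sum>j\<in>{i<..N}. a^(j-i) * z^j) = (a * z^(i+1) - a^(N-i+1) * z^(N+1)) / (1 - a*z)"
  using up_geom_d[OF assms(1), of i "N-i"] assms(2) by simp

lemma FG_add: "FG a (\<lambda>j. f j + g j) i = FG a f i + FG a g i"
  by (simp add: FG_def sum.distrib algebra_simps)
lemma FG_cmult: "FG a (\<lambda>j. c * f j) i = c * FG a f i"
  by (simp add: FG_def sum_distrib_left algebra_simps)
lemma FT_add: "FT a N (\<lambda>j. f j + g j) i = FT a N f i + FT a N g i"
  by (simp add: FT_def sum.distrib algebra_simps)
lemma FT_cmult: "FT a N (\<lambda>j. c * f j) i = c * FT a N f i"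
  by (simp add: FT_def sum_distrib_left algebra_simps)

lemma FG_pow: "z \<noteq> a \<Longrightarrow> FG a (\<lambda>j. z^j) i = a * (z^i - a^i) / (z - a) + z^i/2"
  by (simp add: FG_def low_geom)
lemma FT_pow: "a * z \<noteq> 1 \<Longrightarrow> i \<le> N \<Longrightarrow> FT a N (\<lambda>j. z^j) i = (a * z^(i+1) - a^(N-i+1) * z^(N+1)) / (1 - a*z) + z^i/2"
  by (simp add: FT_def up_geom)

lemma alg1: fixes a Z Ai P z B W Q :: real shows
  "2*(a*(Z - Ai)*P + Z*inverse 2) + ((a*(Z*z) - B*(W*z))*Q + Z*inverse 2)
   = Z*(2*a*P + a*z*Q + 3*inverse 2) - Ai*(2*a*P) - B*(W*z*Q)"
  by (simp add: field_simps)

definition hh :: "real \<Rightarrow> real \<Rightarrow> real" where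
  "hh a z = 2*a/(z-a) + a*z/(1-a*z) + 3/2"

lemma comb:
  fixes a z :: real assumes "z \<noteq> a" "a * z \<noteq> 1" "i \<le> N"
  shows "2 * FG a (\<lambda>j. z^j) i + FT a N (\<lambda>j. z^j) i
       = z^i * hh a z - a^i * (2*a/(z-a)) - a^(N-i+1) * (z^(N+1)/(1-a*z))"
proof -
  have "2 * FG a (\<lambda>j. z^j) i + FT a N (\<lambda>j. z^j) i =
     2 * (a * (z^i - a^i) / (z - a) + z^i/2) + ((a * z^(i+1) - a^(N-i+1) * z^(N+1)) / (1 - a*z) + z^i/2)"
    using assms by (simp add: FG_pow FT_pow)
  also have "\<dots> = z^i * hh a z - a^i * (2*a/(z-a)) - a^(N-i+1) * (z^(N+1)/(1-a*z))"
    unfolding hh_def divide_inverse power_add power_one_right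
    using alg1[of a "z^i" "a^i" "inverse (z-a)" z "a^(N-i+1)" "z^N" "inverse (1-a*z)"] by (simp add: ac_simps)
  finally show ?thesis .
qed

lemma comb_const:
  fixes a :: real assumes "a \<noteq> 1" "i \<le> N"
  shows "2 * FG a (\<lambda>j. c) i + FT a N (\<lambda>j. c) i
       = c * hh a 1 - a^i * (2*a*c/(1-a)) - a^(N-i+1) * (c/(1-a))"
proof -
  have "2 * FG a (\<lambda>j. c) i + FT a N (\<lambda>j. c) i = c * (2 * FG a (\<lambda>j. 1^j) i + FT a N (\<lambda>j. 1^j) i)"
    by (simp add: FG_def FT_def sum_distrib_left algebra_simps)
  also have "\<dots> = c * (1^i * hh a 1 - a^i * (2*a/(1-a)) - a^(N-i+1) * (1^(N+1)/(1-a*1)))"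
    using assms by (subst comb) auto
  finally show ?thesis by (simp add: algebra_simps)
qed



definition "ccf a = 3*(1-a^2)/(a::real)"
definition "rr a = (ccf a + sqrt((ccf a)^2+4))/2"
definition "qq a = -1/rr a"

lemma alg_rchar: fixes c s :: real shows "s^2 = c^2+4 \<Longrightarrow> ((c+s)/2)^2 = c*((c+s)/2) + 1" by (simp add: field_simps power2_eq_square)
lemma alg_qchar: fixes r c P :: real shows "P * r = 1 \<Longrightarrow> r^2 = c*r+1 \<Longrightarrow> (-P)^2 = c*(-P) + 1" by Groebner_Basis.algebra
lemma alg_fac: fixes r c P Z :: real shows "P * r = 1 \<Longrightarrow> r^2 = c*r+1 \<Longrightarrow> Z^2 - c*Z - 1 = (Z - r)*(Z - (-P))" by Groebner_Basis.algebra
lemma alg_hh: fixes a z P Q c :: real shows "P*(z-a) = 1 \<Longrightarrow> Q*(1-a*z) = 1 \<Longrightarrow> z^2 = c*z + 1 \<Longrightarrow> c * a = 3*(1-a^2)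
  \<Longrightarrow> 2*a*P + a*z*Q + 3/2 = 0" by Groebner_Basis.algebra
lemma alg_hh1: fixes a P U :: real shows "P*(1-a) = 1 \<Longrightarrow> U*(3*(1+a)) = 1 \<Longrightarrow> (1-a)*(2*U)*(2*a*P + a*1*P + 3/2) = 1" by Groebner_Basis.algebra

lemma rr_char: "(rr a)^2 = ccf a * rr a + 1"
proof -
  have s: "(sqrt((ccf a)^2+4))^2 = (ccf a)^2+4" by simp
  show ?thesis unfolding rr_def by (rule alg_rchar[OF s])
qed

lemma rr_gt1: assumes "0 < a" "a < (1::real)" shows "rr a > 1"
proof -
  have "a^2 < 1" using assms by (simp add: power_less_one_iff abs_less_iff)
  then have c: "ccf a > 0" using assms unfolding ccf_def by simp
  have "sqrt((ccf a)^2+4) > sqrt 4" by (rule real_sqrt_less_mono) (use c in simp)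
  moreover have "sqrt 4 = (2::real)" by (simp add: real_sqrt_eq_iff)
  ultimately show ?thesis using c unfolding rr_def by simp
qed

lemma qq_char: assumes "0 < a" "a < (1::real)" shows "(qq a)^2 = ccf a * qq a + 1"
proof -
  have r: "rr a > 1" by (rule rr_gt1[OF assms])
  have "(rr a)^2 = ccf a * rr a + 1" by (rule rr_char)
  moreover have "inverse (rr a) * rr a = 1" using r by simp
  ultimately show ?thesis unfolding qq_def using alg_qchar[of "inverse (rr a)" "rr a" "ccf a"] by (simp add: divide_inverse)
qed

lemma qq_bounds: assumes "0 < a" "a < (1::real)" shows "qq a < 0" "qq a > -1"
proof -
  have r: "rr a > 1" by (rule rr_gt1[OF assms])
  show "qq a < 0" using r unfolding qq_def by simp
  show "qq a > -1" using r unfolding qq_def by (simp add: field_simps)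
qed

lemma ar_gt1: assumes "0 < a" "a < (1::real)" shows "a * rr a > 1"
proof -
  have r: "rr a > 1" by (rule rr_gt1[OF assms])
  have q: "qq a < 0" by (rule qq_bounds[OF assms])
  let ?z = "1/a"
  have "inverse (rr a) * rr a = 1" using r by simp
  then have fac: "?z^2 - ccf a * ?z - 1 = (?z - rr a) * (?z - qq a)"
    using alg_fac[of "inverse (rr a)" "rr a" "ccf a" "1/a", OF _ rr_char] unfolding qq_def by (simp add: divide_inverse)
  have "?z^2 - ccf a * ?z - 1 = (2*a^2 - 2)/a^2"
    using assms unfolding ccf_def by (simp add: field_simps power2_eq_square)
  also have "\<dots> < 0" using assms by (simp add: divide_neg_pos power_less_one_iff abs_less_iff)
  finally have "(?z - rr a) * (?z - qq a) < 0" using fac by simp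
  moreover have "?z - qq a > 0" using q assms by (smt (verit) divide_pos_pos)
  ultimately have "?z < rr a" by (simp add: mult_less_0_iff)
  then show ?thesis using assms by (simp add: field_simps)
qed

lemma hh_root:
  fixes a z :: real assumes "0 < a" "z \<noteq> a" "a*z \<noteq> 1" "z^2 = ccf a * z + 1"
  shows "hh a z = 0"
proof -
  have d1: "z - a \<noteq> 0" and d2: "1 - a*z \<noteq> 0" using assms by auto
  have p: "inverse (z-a) * (z-a) = 1" "inverse (1-a*z) * (1-a*z) = 1" using d1 d2 by auto
  have c: "ccf a * a = 3*(1-a^2)" using assms(1) unfolding ccf_def by (simp add: field_simps)
  have "2*a*inverse (z-a) + a*z*inverse (1-a*z) + 3/2 = 0"
    by (rule alg_hh[OF p(1) p(2) assms(4) c])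
  then show ?thesis unfolding hh_def by (simp only: divide_inverse)
qed

lemma hh_one: assumes "0 < a" "a \<noteq> 1" shows "(1-a) * (2/(3*(1+a))) * hh a 1 = 1"
proof -
  have p: "inverse (1-a) * (1-a) = 1" using assms by simp
  have u: "inverse (3*(1+a)) * (3*(1+a)) = 1" using assms by simp
  show ?thesis using alg_hh1[OF p u] unfolding hh_def by (simp only: divide_inverse mult_1_right)
qed



definition "uu a = 2/(3*(1+(a::real)))"
definition "g1 a N = (rr a - a) * rr a^(N+1) / (1 - a*rr a)"
definition "g2 a N = (qq a - a) * qq a^(N+1) / (1 - a*qq a)"
definition "B1 a N = uu a * (g2 a N - 1)/(g1 a N - g2 a N)"
definition "B2 a N = uu a * (1 - g1 a N)/(g1 a N - g2 a N)"
definition "nf a N = (\<lambda>j::nat. (1-a)*uu a + (B1 a N * (rr a - a)) * rr a^j + (B2 a N * (qq a - a)) * qq a^j)"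
definition "c1 a = 2*(1-a)/(1+(a::real))"
definition "c2 a N = 4*a*(-a)^N/(1+(a::real))"
definition "wv a N = (\<lambda>j::nat. c1 a + c2 a N * (-1/a)^j)"

definition "KK a N f i = 2 * FG a f i + FT a N f i"

lemma KK_add: "KK a N (\<lambda>j. f j + g j) i = KK a N f i + KK a N g i"
  by (simp add: KK_def FG_add FT_add)
lemma KK_cmult: "KK a N (\<lambda>j. c * f j) i = c * KK a N f i"
  by (simp add: KK_def FG_cmult FT_cmult algebra_simps)

lemma g1_lt: assumes "0 < a" "a < (1::real)" shows "g1 a N < -1"
proof -
  have r: "rr a > 1" by (rule rr_gt1[OF assms])
  have ar: "a * rr a > 1" by (rule ar_gt1[OF assms])
  have R: "rr a^(N+1) \<ge> 1" using r by (intro one_le_power) simp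
  have "(rr a - a) * rr a^(N+1) \<ge> (rr a - a) * 1" using R r assms by (intro mult_left_mono) auto
  moreover have "rr a - a > a * rr a - 1" using r assms
    by (smt (verit) mult_less_cancel_right2)
  ultimately have "-1 * (1 - a * rr a) < (rr a - a) * rr a^(N+1)" by simp
  then show ?thesis unfolding g1_def using ar by (subst neg_divide_less_eq) auto
qed

lemma g2_abs: assumes "0 < a" "a < (1::real)" shows "\<bar>g2 a N\<bar> < 1"
proof -
  have q0: "qq a < 0" and q1: "qq a > -1" using qq_bounds[OF assms] by auto
  have "\<bar>qq a\<bar> \<le> 1" using q0 q1 by simp
  then have "\<bar>qq a\<bar>^(N+1) \<le> 1" by (intro power_le_one) auto
  then have Q: "\<bar>qq a^(N+1)\<bar> \<le> 1" by (simp only: power_abs)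
  have "a * qq a < 0" using q0 assms by (simp add: mult_pos_neg)
  then have d: "1 - a * qq a > 0" by simp
  have aq: "a - qq a \<ge> 0" using q0 assms by simp
  have e: "\<bar>g2 a N\<bar> = ((a - qq a) * \<bar>qq a^(N+1)\<bar>) / (1 - a*qq a)"
    unfolding g2_def using d q0 assms by (simp add: abs_mult abs_div)
  have n: "(a - qq a) * \<bar>qq a^(N+1)\<bar> \<le> a - qq a" by (rule mult_left_le[OF Q aq])
  have "1 - a*qq a - (a - qq a) = (1-a)*(1+qq a)" by (simp add: algebra_simps)
  moreover have "(1-a)*(1+qq a) > 0" using assms q1 by simp
  ultimately have lt: "a - qq a < 1 - a*qq a" by linarith
  have "((a - qq a) * \<bar>qq a^(N+1)\<bar>) / (1 - a*qq a) \<le> (a - qq a) / (1 - a*qq a)"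
    by (rule divide_right_mono[OF n]) (use d in simp)
  also have "\<dots> < 1" using lt d by simp
  finally show ?thesis using e by simp
qed

lemma g_ne: assumes "0 < a" "a < (1::real)" shows "g1 a N - g2 a N \<noteq> 0"
  using g1_lt[OF assms, of N] g2_abs[OF assms, of N] by auto

lemma alg_B1: fixes u g1 g2 :: real assumes "g1 - g2 \<noteq> 0"
  shows "u*(g2-1)/(g1-g2) + u*(1-g1)/(g1-g2) = -u"
proof -
  have "u*(g2-1)/(g1-g2) + u*(1-g1)/(g1-g2) = (u*(g2-1) + u*(1-g1))/(g1-g2)" by (simp add: add_divide_distrib)
  also have "u*(g2-1) + u*(1-g1) = (-u)*(g1-g2)" by (simp add: algebra_simps)
  finally show ?thesis using assms by simp
qed

lemma alg_B2: fixes u g1 g2 :: real assumes "g1 - g2 \<noteq> 0"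
  shows "u*(g2-1)/(g1-g2) * g1 + u*(1-g1)/(g1-g2) * g2 = -u"
proof -
  have "u*(g2-1)/(g1-g2) * g1 + u*(1-g1)/(g1-g2) * g2 = (u*(g2-1)*g1 + u*(1-g1)*g2)/(g1-g2)" by (simp add: add_divide_distrib)
  also have "u*(g2-1)*g1 + u*(1-g1)*g2 = (-u)*(g1-g2)" by (simp add: algebra_simps)
  finally show ?thesis using assms by simp
qed

lemma E1: assumes "0 < a" "a < (1::real)"
  shows "((1-a)*uu a)/(1-a) + (B1 a N * (rr a - a))/(rr a - a) + (B2 a N * (qq a - a))/(qq a - a) = 0"
proof -
  have r: "rr a > 1" by (rule rr_gt1[OF assms])
  have q0: "qq a < 0" using qq_bounds[OF assms] by auto
  have D: "g1 a N - g2 a N \<noteq> 0" by (rule g_ne[OF assms])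
  have "B1 a N + B2 a N = - uu a" unfolding B1_def B2_def by (rule alg_B1[OF D])
  then show ?thesis using r q0 assms by simp
qed

lemma E2: assumes "0 < a" "a < (1::real)"
  shows "((1-a)*uu a)/(1-a) + (B1 a N * (rr a - a)) * rr a^(N+1)/(1 - a * rr a)
       + (B2 a N * (qq a - a)) * qq a^(N+1)/(1 - a * qq a) = 0"
proof -
  have D: "g1 a N - g2 a N \<noteq> 0" by (rule g_ne[OF assms])
  have "B1 a N * g1 a N + B2 a N * g2 a N = - uu a" unfolding B1_def B2_def by (rule alg_B2[OF D])
  moreover have "(B1 a N * (rr a - a)) * rr a^(N+1)/(1 - a * rr a) = B1 a N * g1 a N" unfolding g1_def by simp
  moreover have "(B2 a N * (qq a - a)) * qq a^(N+1)/(1 - a * qq a) = B2 a N * g2 a N" unfolding g2_def by simp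
  ultimately show ?thesis using assms by simp
qed

lemma alg_comb: fixes A0 h1 X Y a d0 A1 d1 e1 R A2 d2 e2 Q Rr Qq :: real shows
  "(A0*h1 - X*(2*a*A0/d0) - Y*(A0/d0)) + A1*(Rr*0 - X*(2*a/d1) - Y*(R/e1)) + A2*(Qq*0 - X*(2*a/d2) - Y*(Q/e2))
   = A0*h1 - X*(2*a)*(A0/d0 + A1/d1 + A2/d2) - Y*(A0/d0 + A1*R/e1 + A2*Q/e2)"
  by (simp add: divide_inverse algebra_simps)

lemma KK_nf: assumes "0 < a" "a < (1::real)" "i \<le> N"
  shows "KK a N (nf a N) i = 1"
proof -
  have r: "rr a > 1" by (rule rr_gt1[OF assms(1,2)])
  have ar: "a * rr a > 1" by (rule ar_gt1[OF assms(1,2)])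
  have q0: "qq a < 0" using qq_bounds[OF assms(1,2)] by auto
  have aq: "a * qq a < 1" using q0 assms by (smt (verit) mult_pos_neg)
  define A0 where "A0 = (1-a)*uu a"
  define A1 where "A1 = B1 a N * (rr a - a)"
  define A2 where "A2 = B2 a N * (qq a - a)"
  have "nf a N = (\<lambda>j. (\<lambda>j. A0) j + (\<lambda>j. A1 * rr a^j) j + (\<lambda>j. A2 * qq a^j) j)"
    unfolding nf_def A0_def A1_def A2_def by simp
  then have "KK a N (nf a N) i = KK a N (\<lambda>j. A0) i + A1 * KK a N (\<lambda>j. rr a^j) i + A2 * KK a N (\<lambda>j. qq a^j) i"
    by (simp only: KK_add KK_cmult)
  also have "KK a N (\<lambda>j. A0) i = A0 * hh a 1 - a^i * (2*a*A0/(1-a)) - a^(N-i+1) * (A0/(1-a))"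
    unfolding KK_def using assms by (intro comb_const) auto
  also have "KK a N (\<lambda>j. rr a^j) i = rr a^i * 0 - a^i * (2*a/(rr a-a)) - a^(N-i+1) * (rr a^(N+1)/(1-a*rr a))"
  proof -
    have "KK a N (\<lambda>j. rr a^j) i = rr a^i * hh a (rr a) - a^i * (2*a/(rr a-a)) - a^(N-i+1) * (rr a^(N+1)/(1-a*rr a))"
      unfolding KK_def using assms r ar by (intro comb) auto
    moreover have "hh a (rr a) = 0" using assms r ar rr_char[of a] by (intro hh_root) auto
    ultimately show ?thesis by simp
  qed
  also have "KK a N (\<lambda>j. qq a^j) i = qq a^i * 0 - a^i * (2*a/(qq a-a)) - a^(N-i+1) * (qq a^(N+1)/(1-a*qq a))"
  proof -
    have "KK a N (\<lambda>j. qq a^j) i = qq a^i * hh a (qq a) - a^i * (2*a/(qq a-a)) - a^(N-i+1) * (qq a^(N+1)/(1-a*qq a))"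
      unfolding KK_def using assms q0 aq by (intro comb) auto
    moreover have "hh a (qq a) = 0" using assms q0 aq qq_char[OF assms(1,2)] by (intro hh_root) auto
    ultimately show ?thesis by simp
  qed
  also have "(A0 * hh a 1 - a^i * (2*a*A0/(1-a)) - a^(N-i+1) * (A0/(1-a)))
      + A1 * (rr a^i * 0 - a^i * (2*a/(rr a-a)) - a^(N-i+1) * (rr a^(N+1)/(1-a*rr a)))
      + A2 * (qq a^i * 0 - a^i * (2*a/(qq a-a)) - a^(N-i+1) * (qq a^(N+1)/(1-a*qq a)))
    = A0 * hh a 1 - a^i*(2*a)*(A0/(1-a) + A1/(rr a-a) + A2/(qq a-a))
       - a^(N-i+1)*(A0/(1-a) + A1*rr a^(N+1)/(1-a*rr a) + A2*qq a^(N+1)/(1-a*qq a))"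
    by (rule alg_comb)
  also have "A0/(1-a) + A1/(rr a-a) + A2/(qq a-a) = 0"
    unfolding A0_def A1_def A2_def by (rule E1[OF assms(1,2)])
  also have "A0/(1-a) + A1*rr a^(N+1)/(1-a*rr a) + A2*qq a^(N+1)/(1-a*qq a) = 0"
    unfolding A0_def A1_def A2_def by (rule E2[OF assms(1,2)])
  also have "A0 * hh a 1 = 1" unfolding A0_def uu_def using assms by (intro hh_one) auto
  finally show ?thesis by simp
qed

lemma c2W: assumes "0 < a" shows "c2 a N * (-1/a)^(N+1) = -4/(1+a)"
proof -
  have "(-a)^N * (-1/a)^N = ((-a) * (-1/a))^N" by (simp only: power_mult_distrib)
  also have "(-a) * (-1/a) = 1" using assms by simp
  finally have p: "(-a)^N * (-1/a)^N = 1" by simp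
  have "c2 a N * (-1/a)^(N+1) = 4*a/(1+a) * ((-a)^N * (-1/a)^N) * (-1/a)"
    unfolding c2_def by (simp add: algebra_simps)
  also have "\<dots> = -4/(1+a)" using p assms by simp
  finally show ?thesis .
qed

lemma alg_w: fixes a A Wi W w c2 :: real
  assumes "a*w = -1" "c2*W = -4/(1+a)" "0 < a" "a < 1"
  shows "2*(1-a)/(1+a) * ((a*1 - A*1)/(1-a*1) + 1/2) + c2*((a*(Wi*w) - A*W)/(1-a*w) + Wi/2) = 1"
proof -
  have ne1: "1 - a \<noteq> 0" and ne2: "1 + a \<noteq> 0" using assms(3,4) by auto
  have d: "1 - a*w = 2" using assms(1) by simp
  have e: "a*(Wi*w) = -Wi" using assms(1) by (metis mult.left_commute mult_minus1_right)
  have "c2*((a*(Wi*w) - A*W)/(1-a*w) + Wi/2) = -(A*(c2*W))/2"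
    unfolding d e by (simp add: algebra_simps add_divide_distrib diff_divide_distrib)
  also have "\<dots> = 2*A/(1+a)" using assms(2) ne2 by (simp add: field_simps)
  finally have 2: "c2*((a*(Wi*w) - A*W)/(1-a*w) + Wi/2) = 2*A/(1+a)" .
  have f1: "(1-a) * ((a - A)/(1-a)) = a - A" using ne1 by simp
  have "2*(1-a)/(1+a) * ((a*1 - A*1)/(1-a*1) + 1/2) = 2*(1-a)/(1+a) * ((a - A)/(1-a) + 1/2)" by simp
  also have "\<dots> = 2*((1-a) * ((a - A)/(1-a)))/(1+a) + (1-a)/(1+a)"
    by (simp only: distrib_left times_divide_eq_left mult.assoc)
  also have "\<dots> = (2*(a - A) + (1-a))/(1+a)" unfolding f1 by (rule add_divide_distrib[symmetric])
  finally have 1: "2*(1-a)/(1+a) * ((a*1 - A*1)/(1-a*1) + 1/2) = (2*(a - A) + (1-a))/(1+a)" .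
  have n: "(2*(a - A) + (1-a)) + 2*A = 1 + a" by simp
  have "(2*(a - A) + (1-a))/(1+a) + 2*A/(1+a) = ((2*(a - A) + (1-a)) + 2*A)/(1+a)"
    by (rule add_divide_distrib[symmetric])
  also have "\<dots> = 1" unfolding n using ne2 by simp
  finally show ?thesis unfolding 2 1 .
qed

lemma FT_wv: assumes "0 < a" "a < (1::real)" "i \<le> N"
  shows "FT a N (wv a N) i = 1"
proof -
  define w where "w = -1/a"
  have aw: "a * w = -1" using assms unfolding w_def by simp
  have "wv a N = (\<lambda>j. (\<lambda>j. c1 a * 1^j) j + (\<lambda>j. c2 a N * w^j) j)"
    unfolding wv_def w_def by simp
  then have "FT a N (wv a N) i = c1 a * FT a N (\<lambda>j. 1^j) i + c2 a N * FT a N (\<lambda>j. w^j) i"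
    by (simp only: FT_add FT_cmult)
  also have "\<dots> = c1 a * ((a * 1^(i+1) - a^(N-i+1) * 1^(N+1)) / (1 - a*1) + 1^i/2)
      + c2 a N * ((a * w^(i+1) - a^(N-i+1) * w^(N+1)) / (1 - a*w) + w^i/2)"
    using assms aw by (simp only: FT_pow)
  also have "\<dots> = 2*(1-a)/(1+a) * ((a*1 - a^(N-i+1)*1)/(1-a*1) + 1/2)
      + c2 a N * ((a*(w^i*w) - a^(N-i+1)*w^(N+1))/(1-a*w) + w^i/2)"
    unfolding c1_def by (simp add: mult.commute)
  also have "\<dots> = 1"
    by (rule alg_w[OF aw _ assms(1,2)]) (unfold w_def, rule c2W[OF assms(1)])
  finally show ?thesis .
qed

lemma sum_wv: assumes "0 < a"
  shows "(\<Sum>j<N+1. wv a N j) = (N+1)*c1 a + c2 a N * ((-1/a)^(N+1) - 1)/((-1/a) - 1)"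
proof -
  have "-1/a < 0" using assms by simp
  then have w: "-1/a \<noteq> 1" by linarith
  have "(\<Sum>j<N+1. wv a N j) = (\<Sum>j<N+1. c1 a) + c2 a N * (\<Sum>j<N+1. (-1/a)^j)"
    unfolding wv_def by (simp only: sum.distrib sum_distrib_left)
  also have "(\<Sum>j<N+1. (-1/a)^j) = ((-1/a)^(N+1) - 1)/((-1/a) - 1)" by (rule geometric_sum[OF w])
  finally show ?thesis by simp
qed

lemma sum_nf: assumes "0 < a" "a < (1::real)"
  shows "(\<Sum>j<N+1. nf a N j) = (N+1)*((1-a)*uu a) + (B1 a N * (rr a - a)) * (rr a^(N+1) - 1)/(rr a - 1)
     + (B2 a N * (qq a - a)) * (qq a^(N+1) - 1)/(qq a - 1)"
proof -
  have r: "rr a \<noteq> 1" using rr_gt1[OF assms] by simp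
  have q: "qq a \<noteq> 1" using qq_bounds[OF assms] by simp
  have "(\<Sum>j<N+1. nf a N j) = (\<Sum>j<N+1. (1-a)*uu a) + (B1 a N * (rr a - a)) * (\<Sum>j<N+1. rr a^j)
      + (B2 a N * (qq a - a)) * (\<Sum>j<N+1. qq a^j)"
    unfolding nf_def by (simp only: sum.distrib sum_distrib_left)
  also have "(\<Sum>j<N+1. rr a^j) = (rr a^(N+1) - 1)/(rr a - 1)" by (rule geometric_sum[OF r])
  also have "(\<Sum>j<N+1. qq a^j) = (qq a^(N+1) - 1)/(qq a - 1)" by (rule geometric_sum[OF q])
  finally show ?thesis by simp
qed



lemma aa_bounds: assumes "rho > 0" "T > 0" "N > 0" shows "0 < aa rho T N" "aa rho T N < 1"
proof -
  show "0 < aa rho T N" unfolding aa_def by simp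
  have "rho * T / real N > 0" using assms by simp
  then show "aa rho T N < 1" unfolding aa_def by simp
qed

lemma sp_G: "vec (N+1) g \<bullet> (GammaT rho T N *\<^sub>v vec (N+1) f) = (\<Sum>i<N+1. g i * FG (aa rho T N) f i)"
  unfolding scalar_prod_def atLeast0LessThan[symmetric]
  by (intro sum.cong) (auto simp: G_mult[simplified] simp del: index_mult_mat_vec)

lemma sp_GT: "vec (N+1) g \<bullet> (transpose_mat (GammaT rho T N) *\<^sub>v vec (N+1) f) = (\<Sum>i<N+1. g i * FT (aa rho T N) N f i)"
  unfolding scalar_prod_def atLeast0LessThan[symmetric]
  by (intro sum.cong) (auto simp: GT_mult[simplified] simp del: index_mult_mat_vec)

lemma sp_GmGT: "vec (N+1) g \<bullet> ((GammaT rho T N - transpose_mat (GammaT rho T N)) *\<^sub>v vec (N+1) f)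
   = (\<Sum>i<N+1. g i * (FG (aa rho T N) f i - FT (aa rho T N) N f i))"
proof -
  have c1: "GammaT rho T N \<in> carrier_mat (N+1) (N+1)" by (rule G_carrier)
  have c2: "transpose_mat (GammaT rho T N) \<in> carrier_mat (N+1) (N+1)" using c1 by (simp only: transpose_carrier_mat)
  have "(GammaT rho T N - transpose_mat (GammaT rho T N)) *\<^sub>v vec (N+1) f
     = GammaT rho T N *\<^sub>v vec (N+1) f - transpose_mat (GammaT rho T N) *\<^sub>v vec (N+1) f"
    by (rule minus_mult_distrib_mat_vec[OF c1 c2 vec_carrier])
  then show ?thesis
    unfolding scalar_prod_def atLeast0LessThan[symmetric]
    by (intro sum.cong) (auto simp: G_mult[simplified] GT_mult[simplified] simp del: index_mult_mat_vec)
qed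

lemma inj_core:
  assumes "0 < a" "a < 1" "a = aa rho T N" "v \<in> carrier_vec (N+1)"
    and "(\<Sum>i<N+1. v$i * FG a (\<lambda>i. v$i) i) \<le> 0"
  shows "v = 0\<^sub>v (N+1)"
proof (rule eq_vecI)
  fix i assume "i < dim_vec (0\<^sub>v (N+1) :: real vec)"
  then have "i < N+1" by simp
  then have "(\<lambda>i. v$i) i = 0" by (intro qf_pos[OF assms(1,2) assms(5)])
  then show "v $ i = 0\<^sub>v (N+1) $ i" using \<open>i < N+1\<close> by simp
qed (use assms in simp)

lemma sum3: "(\<Sum>i\<in>A. f i * (2*x i + y i)) = 2*(\<Sum>i\<in>A. f i * x i) + (\<Sum>i\<in>A. f i * (y i::real))"
  by (simp add: sum.distrib sum_distrib_left algebra_simps)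

lemma nu_eq: assumes "rho > 0" "T > 0" "N > 0"
  shows "nu_vec rho T N = vec (N+1) (nf (aa rho T N) N)"
proof -
  let ?a = "aa rho T N"
  have a: "0 < ?a" "?a < 1" using aa_bounds[OF assms] by auto
  show ?thesis unfolding nu_vec_def
  proof (rule mat_inv_apply[OF M_carrier])
    fix v :: "real vec" assume v: "v \<in> carrier_vec (N+1)" and z: "(Gamma rho T N + GammaT rho T N) *\<^sub>v v = 0\<^sub>v (N+1)"
    define f where "f = (\<lambda>i. v$i)"
    have vf: "v = vec (N+1) f" unfolding f_def using v by (simp add: vec_eta)
    have k: "2 * FG ?a f i + FT ?a N f i = 0" if "i < N+1" for i
      using M_mult[OF that, of rho T f] z that unfolding vf[symmetric] by simp
    have "(\<Sum>i<N+1. f i * (2 * FG ?a f i + FT ?a N f i)) = 0" using k by simp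
    moreover have "(\<Sum>i<N+1. f i * (2 * FG ?a f i + FT ?a N f i)) = 3 * (\<Sum>i<N+1. f i * FG ?a f i)"
      unfolding sum3 cross[of f rho T N f] by simp
    ultimately have "(\<Sum>i<N+1. v$i * FG ?a (\<lambda>i. v$i) i) \<le> 0" unfolding f_def by simp
    then show "v = 0\<^sub>v (N+1)" by (rule inj_core[OF a refl v])
  next
    show "vec (N+1) (nf ?a N) \<in> carrier_vec (N+1)" by simp
  next
    show "(Gamma rho T N + GammaT rho T N) *\<^sub>v vec (N+1) (nf ?a N) = vec (N+1) (\<lambda>_. 1)"
    proof (rule eq_vecI)
      fix i assume "i < dim_vec (vec (N+1) (\<lambda>_. 1::real))"
      then have i: "i < N+1" by simp
      have "KK ?a N (nf ?a N) i = 1" using a i by (intro KK_nf) auto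
      then show "((Gamma rho T N + GammaT rho T N) *\<^sub>v vec (N+1) (nf ?a N)) $ i = vec (N+1) (\<lambda>_. 1) $ i"
        using i unfolding KK_def by (subst M_mult[OF i]) simp
    qed (simp add: M_carrier[THEN carrier_matD(1)])
  qed
qed

lemma om_eq: assumes "rho > 0" "T > 0" "N > 0"
  shows "omega_vec rho T N = vec (N+1) (wv (aa rho T N) N)"
proof -
  let ?a = "aa rho T N"
  have a: "0 < ?a" "?a < 1" using aa_bounds[OF assms] by auto
  have c: "transpose_mat (GammaT rho T N) \<in> carrier_mat (N+1) (N+1)" using G_carrier by (simp only: transpose_carrier_mat)
  show ?thesis unfolding omega_vec_def Gm_eq
  proof (rule mat_inv_apply[OF c])
    fix v :: "real vec" assume v: "v \<in> carrier_vec (N+1)" and z: "transpose_mat (GammaT rho T N) *\<^sub>v v = 0\<^sub>v (N+1)"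
    define f where "f = (\<lambda>i. v$i)"
    have vf: "v = vec (N+1) f" unfolding f_def using v by (simp add: vec_eta)
    have k: "FT ?a N f i = 0" if "i < N+1" for i
      using GT_mult[OF that, of rho T f] z that unfolding vf[symmetric] by simp
    have "(\<Sum>i<N+1. f i * FT ?a N f i) = 0" using k by simp
    then have "(\<Sum>i<N+1. v$i * FG ?a (\<lambda>i. v$i) i) \<le> 0" using cross[of f rho T N f] unfolding f_def by simp
    then show "v = 0\<^sub>v (N+1)" by (rule inj_core[OF a refl v])
  next
    show "vec (N+1) (wv ?a N) \<in> carrier_vec (N+1)" by simp
  next
    show "transpose_mat (GammaT rho T N) *\<^sub>v vec (N+1) (wv ?a N) = vec (N+1) (\<lambda>_. 1)"
    proof (rule eq_vecI)
      fix i assume "i < dim_vec (vec (N+1) (\<lambda>_. 1::real))"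
      then have i: "i < N+1" by simp
      have "FT ?a N (wv ?a N) i = 1" using a i by (intro FT_wv) auto
      then show "(transpose_mat (GammaT rho T N) *\<^sub>v vec (N+1) (wv ?a N)) $ i = vec (N+1) (\<lambda>_. 1) $ i"
        using i by (subst GT_mult[OF i]) simp
    qed simp
  qed
qed

lemma Q1: assumes "rho > 0" "T > 0" "N > 0"
  shows "nu_vec rho T N \<bullet> (GammaT rho T N *\<^sub>v nu_vec rho T N) = (\<Sum>j<N+1. nf (aa rho T N) N j) / 3"
proof -
  let ?a = "aa rho T N" let ?f = "nf (aa rho T N) N"
  have a: "0 < ?a" "?a < 1" using aa_bounds[OF assms] by auto
  have k: "?f i * (2 * FG ?a ?f i + FT ?a N ?f i) = ?f i" if "i \<in> {..<N+1}" for i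
    using KK_nf[OF a, of i N] that unfolding KK_def by simp
  have "(\<Sum>i<N+1. ?f i * (2 * FG ?a ?f i + FT ?a N ?f i)) = (\<Sum>i<N+1. ?f i)"
    by (rule sum.cong[OF refl k])
  moreover have "(\<Sum>i<N+1. ?f i * (2 * FG ?a ?f i + FT ?a N ?f i)) = 3 * (\<Sum>i<N+1. ?f i * FG ?a ?f i)"
    unfolding sum3 cross[of ?f rho T N ?f] by simp
  ultimately show ?thesis unfolding nu_eq[OF assms] sp_G by simp
qed

lemma Q2: assumes "rho > 0" "T > 0" "N > 0"
  shows "omega_vec rho T N \<bullet> ((GammaT rho T N - transpose_mat (GammaT rho T N)) *\<^sub>v nu_vec rho T N)
    = 3 * (\<Sum>j<N+1. nf (aa rho T N) N j) - (\<Sum>j<N+1. wv (aa rho T N) N j)"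
proof -
  let ?a = "aa rho T N" let ?f = "nf (aa rho T N) N" let ?g = "wv (aa rho T N) N"
  have a: "0 < ?a" "?a < 1" using aa_bounds[OF assms] by auto
  have k: "?g i * (FG ?a ?f i - FT ?a N ?f i) = 3 * (?g i * FG ?a ?f i) - ?g i" if "i \<in> {..<N+1}" for i
  proof -
    have e: "2 * FG ?a ?f i + FT ?a N ?f i = 1" using KK_nf[OF a, of i N] that unfolding KK_def by simp
    have ft: "FT ?a N ?f i = 1 - 2 * FG ?a ?f i" using e by linarith
    show ?thesis unfolding ft by (simp add: algebra_simps)
  qed
  have k2: "?f i * FT ?a N ?g i = ?f i" if "i \<in> {..<N+1}" for i
    using FT_wv[OF a, of i N] that by simp
  have "(\<Sum>i<N+1. ?g i * (FG ?a ?f i - FT ?a N ?f i)) = (\<Sum>i<N+1. 3 * (?g i * FG ?a ?f i) - ?g i)"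
    by (rule sum.cong[OF refl k])
  also have "\<dots> = 3 * (\<Sum>i<N+1. ?g i * FG ?a ?f i) - (\<Sum>i<N+1. ?g i)"
    by (simp add: sum_subtractf sum_distrib_left)
  also have "(\<Sum>i<N+1. ?g i * FG ?a ?f i) = (\<Sum>i<N+1. ?f i * FT ?a N ?g i)" by (rule cross)
  also have "\<dots> = (\<Sum>i<N+1. ?f i)" by (rule sum.cong[OF refl k2])
  finally show ?thesis unfolding nu_eq[OF assms] om_eq[OF assms] sp_GmGT .
qed

lemma Q3: assumes "rho > 0" "T > 0" "N > 0"
  shows "omega_vec rho T N \<bullet> (GammaT rho T N *\<^sub>v omega_vec rho T N) = (\<Sum>j<N+1. wv (aa rho T N) N j)"
proof -
  let ?a = "aa rho T N" let ?g = "wv (aa rho T N) N"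
  have a: "0 < ?a" "?a < 1" using aa_bounds[OF assms] by auto
  have k2: "?g i * FT ?a N ?g i = ?g i" if "i \<in> {..<N+1}" for i
    using FT_wv[OF a, of i N] that by simp
  have "(\<Sum>i<N+1. ?g i * FG ?a ?g i) = (\<Sum>i<N+1. ?g i * FT ?a N ?g i)" by (rule cross)
  also have "\<dots> = (\<Sum>i<N+1. ?g i)" by (rule sum.cong[OF refl k2])
  finally show ?thesis unfolding om_eq[OF assms] sp_G .
qed



lemma L_a: "((\<lambda>N::nat. exp (-x/real N)) \<longlongrightarrow> 1) sequentially"
  by real_asymp

lemma L_NA: "((\<lambda>N::nat. (real N + 1) * (1 - exp (-x/real N))) \<longlongrightarrow> x) sequentially"
  by real_asymp

lemma L_AN: "((\<lambda>N::nat. exp (-x/real N) powr (real N + 1)) \<longlongrightarrow> exp (-x)) sequentially"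
  by real_asymp

lemma L_R: assumes "x > 0" shows "((\<lambda>N::nat. rr (exp (-x/real N)) powr (real N + 1)) \<longlongrightarrow> exp (3*x)) sequentially"
  using assms unfolding rr_def ccf_def by real_asymp

lemma L_P1: assumes "x > 0" shows "((\<lambda>N::nat. (rr (exp (-x/real N)) - exp (-x/real N)) / (rr (exp (-x/real N)) - 1)) \<longlongrightarrow> 4/3) sequentially"
  using assms unfolding rr_def ccf_def by real_asymp

lemma L_P2: assumes "x > 0" shows "((\<lambda>N::nat. (rr (exp (-x/real N)) - exp (-x/real N)) / (1 - exp (-x/real N) * rr (exp (-x/real N)))) \<longlongrightarrow> -2) sequentially"
  using assms unfolding rr_def ccf_def by real_asymp

lemma L_r: assumes "x > 0" shows "((\<lambda>N::nat. rr (exp (-x/real N))) \<longlongrightarrow> 1) sequentially"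
  using assms unfolding rr_def ccf_def by real_asymp



definition "ax x N = exp (-x / real N)"
definition "sNA x N = (real N + 1) * (1 - ax x N)"
definition "sU x N = 2/(3*(1 + ax x N))"
definition "sR x N = rr (ax x N)^(N+1)"
definition "sP1 x N = (rr (ax x N) - ax x N)/(rr (ax x N) - 1)"
definition "sP2 x N = (rr (ax x N) - ax x N)/(1 - ax x N * rr (ax x N))"
definition "sQA x N = (qq (ax x N) - ax x N)/(1 - ax x N * qq (ax x N))"
definition "sQB x N = (qq (ax x N) - ax x N)/(qq (ax x N) - 1)"
definition "sAN x N = ax x N^(N+1)"

lemma aa_ax: "aa rho T N = ax (rho*T) N"
  unfolding aa_def ax_def by simp

lemma Snu_form: assumes "0 < ax x N" "ax x N < 1"
  shows "(\<Sum>j<N+1. nf (ax x N) N j) =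
    sNA x N * sU x N
    + (sU x N * (sQA x N * ((-1)^(N+1)/sR x N) - 1)/(sP2 x N * sR x N - sQA x N * ((-1)^(N+1)/sR x N))) * sP1 x N * (sR x N - 1)
    + (sU x N * (1 - sP2 x N * sR x N)/(sP2 x N * sR x N - sQA x N * ((-1)^(N+1)/sR x N))) * sQB x N * ((-1)^(N+1)/sR x N - 1)"
proof -
  let ?a = "ax x N"
  have q: "qq ?a^(N+1) = (-1)^(N+1)/sR x N" unfolding qq_def sR_def by (rule power_divide)
  have g1: "g1 ?a N = sP2 x N * sR x N" unfolding g1_def sP2_def sR_def by (simp add: divide_inverse ac_simps)
  have g2: "g2 ?a N = sQA x N * ((-1)^(N+1)/sR x N)" unfolding g2_def sQA_def q[symmetric] by (simp add: divide_inverse ac_simps)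
  have u: "uu ?a = sU x N" unfolding uu_def sU_def ..
  show ?thesis
    unfolding sum_nf[OF assms] B1_def B2_def g1 g2 u
    unfolding q sNA_def sP1_def sQB_def sR_def[symmetric] sU_def
    by (simp add: divide_inverse ac_simps)
qed

lemma Som_form: assumes "0 < ax x N"
  shows "(\<Sum>j<N+1. wv (ax x N) N j) =
    2 * sNA x N / (1 + ax x N) + (4 * (-1)^N * sAN x N / (1 + ax x N)) * ((-1)^(N+1) / sAN x N - 1) / (-1/ax x N - 1)"
proof -
  let ?a = "ax x N"
  have c2: "c2 ?a N = 4 * (-1)^N * sAN x N / (1 + ?a)"
    unfolding c2_def sAN_def by (simp add: power_minus[of ?a] algebra_simps)
  have w: "(-1/?a)^(N+1) = (-1)^(N+1) / sAN x N" unfolding sAN_def by (rule power_divide)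
  show ?thesis unfolding sum_wv[OF assms] c2 w c1_def sNA_def by (simp add: algebra_simps)
qed



lemma rr_pos: "rr a > 0"
proof -
  have "sqrt((ccf a)^2+4) > sqrt((ccf a)^2)" by (rule real_sqrt_less_mono) simp
  then have "sqrt((ccf a)^2+4) > \<bar>ccf a\<bar>" by simp
  then have "ccf a + sqrt((ccf a)^2+4) > 0" using abs_ge_minus_self[of "ccf a"] by linarith
  then show ?thesis unfolding rr_def by simp
qed

lemma ax_pos: "0 < ax x N" unfolding ax_def by simp
lemma ax_lt1: "x > 0 \<Longrightarrow> N > 0 \<Longrightarrow> ax x N < 1" unfolding ax_def by simp

lemma lim_ax: "(ax x) \<longlonglongrightarrow> 1"
  unfolding ax_def by (rule L_a)
lemma lim_NA: "(sNA x) \<longlonglongrightarrow> x"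
  unfolding sNA_def ax_def by (rule L_NA)
lemma lim_U: "(sU x) \<longlonglongrightarrow> 1/3"
proof -
  have "(\<lambda>N. 2/(3*(1 + ax x N))) \<longlonglongrightarrow> 2/(3*(1+1))"
    by (intro tendsto_intros lim_ax) simp
  then show ?thesis unfolding sU_def by simp
qed
lemma lim_R: assumes "x > 0" shows "(sR x) \<longlonglongrightarrow> exp (3*x)"
proof -
  have e: "rr (exp (-x/real N)) powr (real N + 1) = sR x N" for N
    unfolding sR_def ax_def using rr_pos powr_realpow[of "rr (exp (-x/real N))" "N+1"] by (simp add: add.commute)
  show ?thesis using L_R[OF assms] unfolding e .
qed
lemma lim_AN: "(sAN x) \<longlonglongrightarrow> exp (-x)"
proof -
  have e: "exp (-x/real N) powr (real N + 1) = sAN x N" for N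
    unfolding sAN_def ax_def using powr_realpow[of "exp (-x/real N)" "N+1"] by (simp add: add.commute)
  show ?thesis using L_AN[of x] unfolding e .
qed
lemma lim_P1: "x > 0 \<Longrightarrow> (sP1 x) \<longlonglongrightarrow> 4/3"
  unfolding sP1_def ax_def by (rule L_P1)
lemma lim_P2: "x > 0 \<Longrightarrow> (sP2 x) \<longlonglongrightarrow> -2"
  unfolding sP2_def ax_def by (rule L_P2)
lemma lim_qq: assumes "x > 0" shows "(\<lambda>N. qq (ax x N)) \<longlonglongrightarrow> -1"
proof -
  have "(\<lambda>N. -1 / rr (ax x N)) \<longlonglongrightarrow> -1/1"
    by (intro tendsto_intros) (use L_r[OF assms] in \<open>simp_all add: ax_def\<close>)
  then show ?thesis unfolding qq_def by simp
qed
lemma lim_QA: assumes "x > 0" shows "(sQA x) \<longlonglongrightarrow> -1"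
proof -
  have "(\<lambda>N. (qq (ax x N) - ax x N)/(1 - ax x N * qq (ax x N))) \<longlonglongrightarrow> (-1 - 1)/(1 - 1 * (-1))"
    by (intro tendsto_intros lim_qq[OF assms] lim_ax) simp
  then show ?thesis unfolding sQA_def by simp
qed
lemma lim_QB: assumes "x > 0" shows "(sQB x) \<longlonglongrightarrow> 1"
proof -
  have "(\<lambda>N. (qq (ax x N) - ax x N)/(qq (ax x N) - 1)) \<longlonglongrightarrow> (-1 - 1)/(-1 - 1)"
    by (intro tendsto_intros lim_qq[OF assms] lim_ax) simp
  then show ?thesis unfolding sQB_def by simp
qed

lemma sub_e: "f \<longlonglongrightarrow> L \<Longrightarrow> (\<lambda>k. f (2*k+2)) \<longlonglongrightarrow> (L::real)"
proof -
  assume "f \<longlonglongrightarrow> L"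
  moreover have "strict_mono (\<lambda>k::nat. 2*k+2)" by (auto simp: strict_mono_def)
  ultimately have "(f \<circ> (\<lambda>k::nat. 2*k+2)) \<longlonglongrightarrow> L" by (rule LIMSEQ_subseq_LIMSEQ)
  then show ?thesis by (simp add: o_def)
qed
lemma sub_o: "f \<longlonglongrightarrow> L \<Longrightarrow> (\<lambda>k. f (2*k+3)) \<longlonglongrightarrow> (L::real)"
proof -
  assume "f \<longlonglongrightarrow> L"
  moreover have "strict_mono (\<lambda>k::nat. 2*k+3)" by (auto simp: strict_mono_def)
  ultimately have "(f \<circ> (\<lambda>k::nat. 2*k+3)) \<longlonglongrightarrow> L" by (rule LIMSEQ_subseq_LIMSEQ)
  then show ?thesis by (simp add: o_def)
qed



lemma AE1: fixes E x Z W :: real assumes "E \<noteq> 0" "Z \<noteq> 0" "W \<noteq> 0" "Z*E = -(2*E^2+1)" "W = 54*E^2 + 27" shows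
 "(x*(1/3) + ((1/3)*((-1)*(-1/E) - 1)/Z)*(4/3)*(E - 1) + ((1/3)*(1 - (-2)*E)/Z)*1*(-1/E - 1)) / 3
  = (2*E^2*(3*x+5) + E + 3*x + 7)/W"
  using assms(1-3) apply (simp add: field_simps)
  using assms(4,5) by Groebner_Basis.algebra

lemma AE2: fixes E F x Z W :: real assumes "E \<noteq> 0" "F \<noteq> 0" "Z \<noteq> 0" "W \<noteq> 0" "Z*E = -(2*E^2+1)" "W = 6*E^2 + 3" shows
 "3 * (x*(1/3) + ((1/3)*((-1)*(-1/E) - 1)/Z)*(4/3)*(E - 1) + ((1/3)*(1 - (-2)*E)/Z)*1*(-1/E - 1))
   - (2*x/(1+1) + (4*1*F/(1+1))*((-1)/F - 1)/(-1/1 - 1))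
  = (4*E^2 - 6*(E^2*F) + E - 3*F + 4)/W"
  using assms(1-4) apply (simp add: field_simps)
  using assms(5,6) by Groebner_Basis.algebra

lemma AE3: fixes F x :: real assumes "F \<noteq> 0" shows
 "2*x/(1+1) + (4*1*F/(1+1))*((-1)/F - 1)/(-1/1 - 1) = F + x + 1"
  using assms by (simp add: field_simps)

lemma AO1: fixes E x Z W :: real assumes "E \<noteq> 0" "Z \<noteq> 0" "W \<noteq> 0" "Z*E = -(2*E^2-1)" "W = 54*E^2 - 27" shows
 "(x*(1/3) + ((1/3)*((-1)*(1/E) - 1)/Z)*(4/3)*(E - 1) + ((1/3)*(1 - (-2)*E)/Z)*1*(1/E - 1)) / 3
  = (2*E^2*(3*x+5) - 3*E - 3*x - 7)/W"
  using assms(1-3) apply (simp add: field_simps)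
  using assms(4,5) by Groebner_Basis.algebra

lemma AO2: fixes E F x Z W :: real assumes "E \<noteq> 0" "F \<noteq> 0" "Z \<noteq> 0" "W \<noteq> 0" "Z*E = -(2*E^2-1)" "W = -6*E^2 + 3" shows
 "3 * (x*(1/3) + ((1/3)*((-1)*(1/E) - 1)/Z)*(4/3)*(E - 1) + ((1/3)*(1 - (-2)*E)/Z)*1*(1/E - 1))
   - (2*x/(1+1) + (4*(-1)*F/(1+1))*(1/F - 1)/(-1/1 - 1))
  = (-4*E^2 - 6*(E^2*F) + 3*E + 3*F + 4)/W"
  using assms(1-4) apply (simp add: field_simps)
  using assms(5,6) by Groebner_Basis.algebra

lemma AO3: fixes F x :: real assumes "F \<noteq> 0" shows
 "2*x/(1+1) + (4*(-1)*F/(1+1))*(1/F - 1)/(-1/1 - 1) = - F + x + 1"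
  using assms by (simp add: field_simps)


definition "SN x s N = sNA x N * sU x N
    + (sU x N * (sQA x N * (s/sR x N) - 1)/(sP2 x N * sR x N - sQA x N * (s/sR x N))) * sP1 x N * (sR x N - 1)
    + (sU x N * (1 - sP2 x N * sR x N)/(sP2 x N * sR x N - sQA x N * (s/sR x N))) * sQB x N * (s/sR x N - 1)"
definition "SW x t s N = 2 * sNA x N / (1 + ax x N) + (4 * t * sAN x N / (1 + ax x N)) * (s / sAN x N - 1) / (-1/ax x N - 1)"

lemma Snu_SN: "x > 0 \<Longrightarrow> N > 0 \<Longrightarrow> (\<Sum>j<N+1. nf (ax x N) N j) = SN x ((-1)^(N+1)) N"
  unfolding SN_def by (rule Snu_form[OF ax_pos ax_lt1])
lemma Som_SW: "(\<Sum>j<N+1. wv (ax x N) N j) = SW x ((-1)^N) ((-1)^(N+1)) N"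
  unfolding SW_def by (rule Som_form[OF ax_pos])

lemma pw_e: "(-1::real)^(2*k+2+1) = -1" "(-1::real)^(2*k+2) = 1"
  by (simp_all add: power_add power_mult)
lemma pw_o: "(-1::real)^(2*k+3+1) = 1" "(-1::real)^(2*k+3) = -1"
  by (simp_all add: power_add power_mult)

lemma lim_SN_e: assumes "x > 0"
  shows "(\<lambda>k. SN x (-1) (2*k+2)) \<longlonglongrightarrow>
    x*(1/3) + ((1/3)*((-1)*(-1/exp(3*x)) - 1)/((-2)*exp(3*x) - (-1)*(-1/exp(3*x))))*(4/3)*(exp(3*x) - 1)
     + ((1/3)*(1 - (-2)*exp(3*x))/((-2)*exp(3*x) - (-1)*(-1/exp(3*x))))*1*(-1/exp(3*x) - 1)"
proof -
  have z: "(-2)*exp(3*x) - (-1)*(-1/exp(3*x)) \<noteq> 0"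
  proof -
    have p: "0 < exp(3*x)" "0 < 1/exp(3*x)" by simp_all
    have "(-2)*exp(3*x) - (-1)*(-1/exp(3*x)) = -(2*exp(3*x)) - 1/exp(3*x)" by simp
    then have "(-2)*exp(3*x) - (-1)*(-1/exp(3*x)) < 0" using p by linarith
    then show ?thesis by simp
  qed
  show ?thesis unfolding SN_def
    by (intro tendsto_intros sub_e[OF lim_NA] sub_e[OF lim_U] sub_e[OF lim_QA[OF assms]] sub_e[OF lim_R[OF assms]]
        sub_e[OF lim_P2[OF assms]] sub_e[OF lim_P1[OF assms]] sub_e[OF lim_QB[OF assms]]) (use z in simp_all)
qed

lemma lim_SN_o: assumes "x > 0"
  shows "(\<lambda>k. SN x 1 (2*k+3)) \<longlonglongrightarrow>
    x*(1/3) + ((1/3)*((-1)*(1/exp(3*x)) - 1)/((-2)*exp(3*x) - (-1)*(1/exp(3*x))))*(4/3)*(exp(3*x) - 1)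
     + ((1/3)*(1 - (-2)*exp(3*x))/((-2)*exp(3*x) - (-1)*(1/exp(3*x))))*1*(1/exp(3*x) - 1)"
proof -
  have z: "(-2)*exp(3*x) - (-1)*(1/exp(3*x)) \<noteq> 0"
  proof -
    have e: "exp(3*x) > 1" using assms by simp
    then have p: "1/exp(3*x) < 1" by simp
    have "(-2)*exp(3*x) - (-1)*(1/exp(3*x)) = -(2*exp(3*x)) + 1/exp(3*x)" by simp
    then have "(-2)*exp(3*x) - (-1)*(1/exp(3*x)) < 0" using p e by linarith
    then show ?thesis by simp
  qed
  show ?thesis unfolding SN_def
    by (intro tendsto_intros sub_o[OF lim_NA] sub_o[OF lim_U] sub_o[OF lim_QA[OF assms]] sub_o[OF lim_R[OF assms]]
        sub_o[OF lim_P2[OF assms]] sub_o[OF lim_P1[OF assms]] sub_o[OF lim_QB[OF assms]]) (use z in simp_all)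
qed

lemma lim_SW_e:
  shows "(\<lambda>k. SW x 1 (-1) (2*k+2)) \<longlonglongrightarrow> 2*x/(1+1) + (4*1*exp(-x)/(1+1))*((-1)/exp(-x) - 1)/(-1/1 - 1)"
  unfolding SW_def
  by (intro tendsto_intros sub_e[OF lim_NA] sub_e[OF lim_ax] sub_e[OF lim_AN]) simp_all

lemma lim_SW_o:
  shows "(\<lambda>k. SW x (-1) 1 (2*k+3)) \<longlonglongrightarrow> 2*x/(1+1) + (4*(-1)*exp(-x)/(1+1))*(1/exp(-x) - 1)/(-1/1 - 1)"
  unfolding SW_def
  by (intro tendsto_intros sub_o[OF lim_NA] sub_o[OF lim_ax] sub_o[OF lim_AN]) simp_all



theorem lemmaA6:
  fixes rho T :: real
  assumes "rho > 0" and "T > 0"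
  defines "nu \<equiv> nu_vec rho T" and "om \<equiv> omega_vec rho T"
      and "G \<equiv> GammaT rho T" and "x \<equiv> rho * T"
  shows
   "((\<lambda>k. nu (2*k+2) \<bullet> (G (2*k+2) *\<^sub>v nu (2*k+2))) \<longlongrightarrow>
       (2 * exp (6*x) * (3*x + 5) + exp (3*x) + 3*x + 7) / (54 * exp (6*x) + 27)) sequentially \<and>
    ((\<lambda>k. om (2*k+2) \<bullet> ((G (2*k+2) - transpose_mat (G (2*k+2))) *\<^sub>v nu (2*k+2))) \<longlongrightarrow>
       (4 * exp (6*x) - 6 * exp (5*x) + exp (3*x) - 3 * exp (-x) + 4) / (6 * exp (6*x) + 3)) sequentially \<and>
    ((\<lambda>k. om (2*k+2) \<bullet> (G (2*k+2) *\<^sub>v om (2*k+2))) \<longlongrightarrow>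
       exp (-x) + x + 1) sequentially \<and>
    ((\<lambda>k. nu (2*k+3) \<bullet> (G (2*k+3) *\<^sub>v nu (2*k+3))) \<longlongrightarrow>
       (2 * exp (6*x) * (3*x + 5) - 3 * exp (3*x) - 3*x - 7) / (54 * exp (6*x) - 27)) sequentially \<and>
    ((\<lambda>k. om (2*k+3) \<bullet> ((G (2*k+3) - transpose_mat (G (2*k+3))) *\<^sub>v nu (2*k+3))) \<longlongrightarrow>
       (- 4 * exp (6*x) - 6 * exp (5*x) + 3 * exp (3*x) + 3 * exp (-x) + 4) / (- 6 * exp (6*x) + 3)) sequentially \<and>
    ((\<lambda>k. om (2*k+3) \<bullet> (G (2*k+3) *\<^sub>v om (2*k+3))) \<longlongrightarrow>
       - exp (-x) + x + 1) sequentially"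
proof -
  have x0: "x > 0" using assms(1,2) unfolding x_def by simp
  have axe: "\<And>N. aa rho T N = ax x N" unfolding x_def by (rule aa_ax)
  define E where "E = exp(3*x)"
  define F where "F = exp(-x)"
  have E1: "E > 1" unfolding E_def using x0 by simp
  have E0: "E \<noteq> 0" using E1 by simp
  have F0: "F \<noteq> 0" unfolding F_def by simp
  have e6: "exp(6*x) = E^2" unfolding E_def power2_eq_square exp_add[symmetric] by simp
  have "5*x = 3*x + 3*x + (-x)" by simp
  then have e5: "exp(5*x) = E^2*F" unfolding E_def F_def power2_eq_square by (simp only: exp_add)
  have base1: "nu N \<bullet> (G N *\<^sub>v nu N) = SN x ((-1)^(N+1)) N / 3" if "N > 0" for N
    using Q1[OF assms(1,2) that] Snu_SN[OF x0 that] unfolding nu_def G_def axe by simp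
  have base2: "om N \<bullet> ((G N - transpose_mat (G N)) *\<^sub>v nu N) = 3 * SN x ((-1)^(N+1)) N - SW x ((-1)^N) ((-1)^(N+1)) N"
    if "N > 0" for N
    using Q2[OF assms(1,2) that] Snu_SN[OF x0 that] Som_SW[of x N] unfolding nu_def om_def G_def axe by simp
  have base3: "om N \<bullet> (G N *\<^sub>v om N) = SW x ((-1)^N) ((-1)^(N+1)) N" if "N > 0" for N
    using Q3[OF assms(1,2) that] Som_SW[of x N] unfolding om_def G_def axe by simp
  have q1e: "(\<lambda>k. nu (2*k+2) \<bullet> (G (2*k+2) *\<^sub>v nu (2*k+2))) = (\<lambda>k. SN x (-1) (2*k+2) / 3)" (is "?l = ?r")
  proof (rule ext)
    fix k :: nat
    have "(0::nat) < 2*k+2" by simp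
    note b = base1[OF this]
    show "?l k = ?r k" using b unfolding pw_e .
  qed
  have q2e: "(\<lambda>k. om (2*k+2) \<bullet> ((G (2*k+2) - transpose_mat (G (2*k+2))) *\<^sub>v nu (2*k+2)))
      = (\<lambda>k. 3 * SN x (-1) (2*k+2) - SW x 1 (-1) (2*k+2))" (is "?l = ?r")
  proof (rule ext)
    fix k :: nat
    have "(0::nat) < 2*k+2" by simp
    note b = base2[OF this]
    show "?l k = ?r k" using b unfolding pw_e .
  qed
  have q3e: "(\<lambda>k. om (2*k+2) \<bullet> (G (2*k+2) *\<^sub>v om (2*k+2))) = (\<lambda>k. SW x 1 (-1) (2*k+2))" (is "?l = ?r")
  proof (rule ext)
    fix k :: nat
    have "(0::nat) < 2*k+2" by simp
    note b = base3[OF this]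
    show "?l k = ?r k" using b unfolding pw_e .
  qed
  have q1o: "(\<lambda>k. nu (2*k+3) \<bullet> (G (2*k+3) *\<^sub>v nu (2*k+3))) = (\<lambda>k. SN x 1 (2*k+3) / 3)" (is "?l = ?r")
  proof (rule ext)
    fix k :: nat
    have "(0::nat) < 2*k+3" by simp
    note b = base1[OF this]
    show "?l k = ?r k" using b unfolding pw_o .
  qed
  have q2o: "(\<lambda>k. om (2*k+3) \<bullet> ((G (2*k+3) - transpose_mat (G (2*k+3))) *\<^sub>v nu (2*k+3)))
      = (\<lambda>k. 3 * SN x 1 (2*k+3) - SW x (-1) 1 (2*k+3))" (is "?l = ?r")
  proof (rule ext)
    fix k :: nat
    have "(0::nat) < 2*k+3" by simp
    note b = base2[OF this]
    show "?l k = ?r k" using b unfolding pw_o .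
  qed
  have q3o: "(\<lambda>k. om (2*k+3) \<bullet> (G (2*k+3) *\<^sub>v om (2*k+3))) = (\<lambda>k. SW x (-1) 1 (2*k+3))" (is "?l = ?r")
  proof (rule ext)
    fix k :: nat
    have "(0::nat) < 2*k+3" by simp
    note b = base3[OF this]
    show "?l k = ?r k" using b unfolding pw_o .
  qed
  have Ep: "E > 0" using E1 by simp
  have E2: "E^2 > 1" using E1 by (simp add: one_less_power)
  let ?Ze = "(-2)*E - (-1)*(-1/E)"
  let ?Zo = "(-2)*E - (-1)*(1/E)"
  have pE: "0 < 1/E" "1/E < 1" using E1 by simp_all
  have "?Ze = -(2*E) - 1/E" by simp
  then have Ze0: "?Ze \<noteq> 0" using pE Ep by linarith
  have "?Zo = -(2*E) + 1/E" by simp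
  then have Zo0: "?Zo \<noteq> 0" using pE E1 by linarith
  have ZeE: "?Ze * E = -(2*E^2+1)" using E0 by (simp add: field_simps power2_eq_square)
  have ZoE: "?Zo * E = -(2*E^2-1)" using E0 by (simp add: field_simps power2_eq_square)
  have W1: "54*E^2 + 27 \<noteq> 0" "6*E^2 + 3 \<noteq> 0" "54*E^2 - 27 \<noteq> 0" "-6*E^2 + 3 \<noteq> 0" using E2 by linarith+
  have LSNe: "(\<lambda>k. SN x (-1) (2*k+2)) \<longlonglongrightarrow>
    x*(1/3) + ((1/3)*((-1)*(-1/E) - 1)/?Ze)*(4/3)*(E - 1) + ((1/3)*(1 - (-2)*E)/?Ze)*1*(-1/E - 1)"
    using lim_SN_e[OF x0] unfolding E_def[symmetric] .
  have LSNo: "(\<lambda>k. SN x 1 (2*k+3)) \<longlonglongrightarrow>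
    x*(1/3) + ((1/3)*((-1)*(1/E) - 1)/?Zo)*(4/3)*(E - 1) + ((1/3)*(1 - (-2)*E)/?Zo)*1*(1/E - 1)"
    using lim_SN_o[OF x0] unfolding E_def[symmetric] .
  have LSWe: "(\<lambda>k. SW x 1 (-1) (2*k+2)) \<longlonglongrightarrow> 2*x/(1+1) + (4*1*F/(1+1))*((-1)/F - 1)/(-1/1 - 1)"
    using lim_SW_e[of x] unfolding F_def[symmetric] .
  have LSWo: "(\<lambda>k. SW x (-1) 1 (2*k+3)) \<longlonglongrightarrow> 2*x/(1+1) + (4*(-1)*F/(1+1))*(1/F - 1)/(-1/1 - 1)"
    using lim_SW_o[of x] unfolding F_def[symmetric] .
  have c1: "(\<lambda>k. SN x (-1) (2*k+2) / 3) \<longlonglongrightarrow> (2*E^2*(3*x+5) + E + 3*x + 7)/(54*E^2 + 27)"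
    unfolding AE1[OF E0 Ze0 W1(1) ZeE refl, symmetric] by (intro tendsto_divide LSNe tendsto_const) simp
  have c2: "(\<lambda>k. 3 * SN x (-1) (2*k+2) - SW x 1 (-1) (2*k+2)) \<longlonglongrightarrow> (4*E^2 - 6*(E^2*F) + E - 3*F + 4)/(6*E^2 + 3)"
    unfolding AE2[where x=x, OF E0 F0 Ze0 W1(2) ZeE refl, symmetric] by (intro tendsto_diff tendsto_mult LSNe LSWe tendsto_const)
  have c3: "(\<lambda>k. SW x 1 (-1) (2*k+2)) \<longlonglongrightarrow> F + x + 1"
    unfolding AE3[OF F0, symmetric] by (rule LSWe)
  have c4: "(\<lambda>k. SN x 1 (2*k+3) / 3) \<longlonglongrightarrow> (2*E^2*(3*x+5) - 3*E - 3*x - 7)/(54*E^2 - 27)"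
    unfolding AO1[OF E0 Zo0 W1(3) ZoE refl, symmetric] by (intro tendsto_divide LSNo tendsto_const) simp
  have c5: "(\<lambda>k. 3 * SN x 1 (2*k+3) - SW x (-1) 1 (2*k+3)) \<longlonglongrightarrow> (-4*E^2 - 6*(E^2*F) + 3*E + 3*F + 4)/(-6*E^2 + 3)"
    unfolding AO2[where x=x, OF E0 F0 Zo0 W1(4) ZoE refl, symmetric] by (intro tendsto_diff tendsto_mult LSNo LSWo tendsto_const)
  have c6: "(\<lambda>k. SW x (-1) 1 (2*k+3)) \<longlonglongrightarrow> - F + x + 1"
    unfolding AO3[OF F0, symmetric] by (rule LSWo)
  show ?thesis
    unfolding q1e q2e q3e q1o q2o q3o e6 e5 E_def[symmetric] F_def[symmetric]
    using c1 c2 c3 c4 c5 c6 by blast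
qed


end
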